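(* Let $\mathcal{X}\subseteq\mathbb{R}^d$ be nonempty, closed and convex, let $f:\mathbb{R}^d\to\mathbb{R}$ be differentiable (not necessarily convex), and assume the set $\mathcal{X}_\star:=\operatorname{arg\,min}_{x\in\mathcal{X}} f(x)$ is nonempty. Fix $x_k\in\mathcal{X}$ and $x_\star\in\mathcal{X}_\star$, and suppose that one of the following two conditions holds: (Type I) $\nabla f(x_k)\neq 0$ and $0<t_k\le \dfrac{\langle \nabla f(x_k),x_k-x_\star\rangle}{\|\nabla f(x_k)\|}$; (Type II) $\nabla f(x_k)\neq\nabla f(x_\star)$ and $0<t_k\le \dfrac{\langle \nabla f(x_k)-\nabla f(x_\star),x_k-x_\star\rangle}{\|\nabla f(x_k)-\nabla f(x_\star)\|}$. Let $x_{k+1}\in\operatorname{arg\,min}_{z\in\mathcal{X}\cap\mathcal{B}(x_k,t_k)}\langle\nabla f(x_k),z\rangle$. Then: (i) $t_k\le\|x_k-x_\star\|$; (ii) $\|x_{k+1}-x_k\|=t_k$; (iii) $\|x_{k+1}-x_\star\|^2\le\|x_k-x_\star\|^2-t_k^2$.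
   Context: $\|\cdot\|$ is the Euclidean norm and $\langle\cdot,\cdot\rangle$ the standard inner product on $\mathbb{R}^d$; $\mathcal{B}(x,t):=\{y\in\mathbb{R}^d:\|y-x\|\le t\}$. *)

theory Defs
  imports "HOL-Analysis.Analysis"
begin

end

theory Submission
  imports Defs
begin

lemma first_order_opt:
  fixes f :: "'a::euclidean_space \<Rightarrow> real"
  assumes der: "(f has_derivative (\<lambda>h. g \<bullet> h)) (at xs)"
    and cvx: "convex X" and xs: "xs \<in> X" and z: "z \<in> X"
    and min: "\<And>y. y \<in> X \<Longrightarrow> f xs \<le> f y"
  shows "g \<bullet> (z - xs) \<ge> 0"
proof (rule ccontr)
  assume neg: "\<not> g \<bullet> (z - xs) \<ge> 0"
  have "((\<lambda>s. xs + s *\<^sub>R (z - xs)) has_derivative (\<lambda>s. s *\<^sub>R (z - xs))) (at 0)"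
    by (intro derivative_eq_intros) auto
  moreover have "(f has_derivative (\<lambda>h. g \<bullet> h)) (at (xs + 0 *\<^sub>R (z - xs)))" using der by simp
  ultimately have "((\<lambda>s. f (xs + s *\<^sub>R (z - xs))) has_derivative (\<lambda>s. g \<bullet> (s *\<^sub>R (z - xs)))) (at 0)"
    by (rule has_derivative_compose)
  then have "DERIV (\<lambda>s. f (xs + s *\<^sub>R (z - xs))) 0 :> g \<bullet> (z - xs)"
    unfolding has_field_derivative_def
  proof -
    assume a: "((\<lambda>s. f (xs + s *\<^sub>R (z - xs))) has_derivative (\<lambda>s. g \<bullet> (s *\<^sub>R (z - xs)))) (at 0)"
    have "(\<lambda>s. g \<bullet> (s *\<^sub>R (z - xs))) = (*) (g \<bullet> (z - xs))" by (auto simp: fun_eq_iff)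
    with a show "((\<lambda>s. f (xs + s *\<^sub>R (z - xs))) has_derivative (*) (g \<bullet> (z - xs))) (at 0)" by simp
  qed
  from DERIV_neg_dec_right[OF this] neg obtain d where d: "d > 0"
    "\<forall>h>0. h < d \<longrightarrow> f (xs + 0 *\<^sub>R (z - xs)) > f (xs + (0 + h) *\<^sub>R (z - xs))" by force
  define h where "h = min (d/2) 1"
  have h: "h > 0" "h < d" "h \<le> 1" using d by (auto simp: h_def)
  have "xs + h *\<^sub>R (z - xs) \<in> X"
  proof -
    have "xs + h *\<^sub>R (z - xs) = (1 - h) *\<^sub>R xs + h *\<^sub>R z" by (simp add: algebra_simps)
    thus ?thesis using cvx xs z h by (simp add: convex_def)
  qed
  with min have "f xs \<le> f (xs + h *\<^sub>R (z - xs))" by blast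
  with d(2) h show False by force
qed

lemma quad_lemma:
  fixes a b c T :: real
  assumes "\<And>l. 0 < l \<Longrightarrow> l \<le> 1 \<Longrightarrow> a + 2*b*l + c*l^2 \<ge> T" "a \<le> T" "c \<ge> 0"
  shows "a = T \<and> b \<ge> 0"
proof -
  have "a = T"
  proof (rule ccontr)
    assume "a \<noteq> T" hence lt: "a < T" using assms by simp
    define l where "l = min 1 ((T - a) / (2*\<bar>b\<bar> + c + 1))"
    have l: "0 < l" "l \<le> 1" "l \<le> (T - a) / (2*\<bar>b\<bar> + c + 1)" using lt assms(3) by (auto simp: l_def)
    have "l * (2*\<bar>b\<bar> + c + 1) \<le> T - a" using l(3) assms(3) by (simp add: pos_le_divide_eq)
    moreover have "2*b*l + c*l^2 \<le> l * (2*\<bar>b\<bar> + c)"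
    proof -
      have "c*l^2 \<le> c*l" using l assms(3) by (simp add: power2_eq_square mult_left_mono mult_left_le)
      moreover have "2*b*l \<le> 2*\<bar>b\<bar>*l" using l by (simp add: mult_right_mono)
      ultimately show ?thesis by (simp add: algebra_simps)
    qed
    ultimately have "a + 2*b*l + c*l^2 < T" using l by (simp add: algebra_simps)
    with assms(1)[OF l(1,2)] show False by simp
  qed
  moreover have "b \<ge> 0"
  proof (rule ccontr)
    assume "\<not> b \<ge> 0" hence b: "b < 0" by simp
    define l where "l = min 1 (- b / (c + 1))"
    have l: "0 < l" "l \<le> 1" "l \<le> - b / (c + 1)" using b assms(3) by (auto simp: l_def divide_neg_pos)
    have "l * (c + 1) \<le> (- b / (c + 1)) * (c + 1)" using l(3) assms(3) by (intro mult_right_mono) auto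
    hence "l * (c + 1) \<le> - b" using assms(3) by simp
    hence "c * l \<le> - b" using l by (simp add: algebra_simps)
    hence "2*b + c*l < 0" using b by simp
    hence "l * (2*b + c*l) < 0" using l by (simp add: mult_pos_neg)
    hence "2*b*l + c*l^2 < 0" by (simp add: algebra_simps power2_eq_square)
    with assms(1)[OF l(1,2)] \<open>a = T\<close> show False by simp
  qed
  ultimately show ?thesis by simp
qed

theorem theorem1:
  fixes f :: "'a::euclidean_space \<Rightarrow> real"
    and grad :: "'a \<Rightarrow> 'a"
    and X :: "'a set"
    and xk xs xk1 :: 'a
    and t :: real
  assumes X_ne: "X \<noteq> {}" and X_closed: "closed X" and X_convex: "convex X"
    and f_grad: "\<And>x. (f has_derivative (\<lambda>h. grad x \<bullet> h)) (at x)"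
    and xk_in: "xk \<in> X"
    and xs_min: "xs \<in> X" "\<And>y. y \<in> X \<Longrightarrow> f xs \<le> f y"
    and step: "(grad xk \<noteq> 0 \<and> 0 < t \<and>
                 t \<le> (grad xk \<bullet> (xk - xs)) / norm (grad xk))
             \<or> (grad xk \<noteq> grad xs \<and> 0 < t \<and>
                 t \<le> ((grad xk - grad xs) \<bullet> (xk - xs)) / norm (grad xk - grad xs))"
    and xk1_min: "xk1 \<in> X \<inter> cball xk t"
      "\<And>z. z \<in> X \<inter> cball xk t \<Longrightarrow> grad xk \<bullet> xk1 \<le> grad xk \<bullet> z"
  shows "t \<le> norm (xk - xs) \<and> norm (xk1 - xk) = t \<and>
         (norm (xk1 - xs))\<^sup>2 \<le> (norm (xk - xs))\<^sup>2 - t\<^sup>2"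
proof -
  let ?g = "grad xk"
  obtain c where c: "c = 0 \<or> c = grad xs" "?g - c \<noteq> 0" "0 < t"
      "t \<le> ((?g - c) \<bullet> (xk - xs)) / norm (?g - c)"
    using step
  proof
    assume "?g \<noteq> 0 \<and> 0 < t \<and> t \<le> (?g \<bullet> (xk - xs)) / norm ?g"
    then show ?thesis using that[of 0] by simp
  next
    assume "?g \<noteq> grad xs \<and> 0 < t \<and>
                 t \<le> ((?g - grad xs) \<bullet> (xk - xs)) / norm (?g - grad xs)"
    then show ?thesis using that[of "grad xs"] by simp
  qed
  define h where "h = ?g - c"
  have hne: "h \<noteq> 0" and tpos: "0 < t" and th: "t \<le> (h \<bullet> (xk - xs)) / norm h"
    using c by (auto simp: h_def)
  have P: "\<And>z. z \<in> X \<Longrightarrow> c \<bullet> (z - xs) \<ge> 0"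
    using c(1) first_order_opt[OF f_grad X_convex xs_min(1) _ xs_min(2)] by auto
  have nh: "norm h > 0" using hne by simp
  have htx: "t * norm h \<le> h \<bullet> (xk - xs)" using th nh by (simp add: pos_le_divide_eq)
  have cs: "h \<bullet> (xk - xs) \<le> norm h * norm (xk - xs)" by (rule norm_cauchy_schwarz)
  have i: "t \<le> norm (xk - xs)"
    using htx cs nh by (metis mult.commute mult_le_cancel_left_pos order_trans)
  have S: "h \<bullet> xs < h \<bullet> z" if "norm (z - xk) < t" for z
  proof -
    have "- (norm h * norm (z - xk)) \<le> h \<bullet> (z - xk)"
      using norm_cauchy_schwarz[of "-h" "z - xk"] by simp
    moreover have "norm h * norm (z - xk) < norm h * t" using that nh by simp
    ultimately have "h \<bullet> (z - xk) > - (t * norm h)" by (simp add: mult.commute)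
    with htx have "h \<bullet> (z - xk) + h \<bullet> (xk - xs) > 0" by linarith
    thus ?thesis by (simp add: inner_diff_right)
  qed
  have key: "norm (xk1 + l *\<^sub>R (xs - xk1) - xk) \<ge> t" if l: "0 < l" "l \<le> 1" for l
  proof (rule ccontr)
    assume "\<not> ?thesis"
    hence lt: "norm (xk1 + l *\<^sub>R (xs - xk1) - xk) < t" by simp
    let ?z = "xk1 + l *\<^sub>R (xs - xk1)"
    have "?z = (1 - l) *\<^sub>R xk1 + l *\<^sub>R xs" by (simp add: algebra_simps)
    hence zX: "?z \<in> X" using X_convex xk1_min(1) xs_min(1) l by (simp add: convex_def)
    have "?z \<in> cball xk t" using lt by (simp add: dist_norm norm_minus_commute)
    with zX have "?g \<bullet> xk1 \<le> ?g \<bullet> ?z" using xk1_min(2) by blast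
    hence "0 \<le> l * (?g \<bullet> (xs - xk1))" by (simp add: inner_simps)
    hence g1: "0 \<le> ?g \<bullet> (xs - xk1)" using l by (simp add: zero_le_mult_iff)
    have "c \<bullet> (xk1 - xs) \<ge> 0" using P xk1_min(1) by blast
    with g1 have h1: "0 \<le> h \<bullet> (xs - xk1)" by (simp add: h_def inner_simps)
    have "h \<bullet> ?z = h \<bullet> xk1 + l * (h \<bullet> (xs - xk1))" by (simp add: inner_simps)
    also have "\<dots> \<le> h \<bullet> xk1 + 1 * (h \<bullet> (xs - xk1))"
      using h1 l by (intro add_left_mono mult_right_mono) auto
    also have "\<dots> = h \<bullet> xs" by (simp add: inner_simps)
    finally show False using S[OF lt] by simp
  qed
  define u where "u = xk1 - xk"
  define v where "v = xs - xk"
  have exp: "(norm (xk1 + l *\<^sub>R (xs - xk1) - xk))\<^sup>2 =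
      (norm u)\<^sup>2 + 2 * (u \<bullet> v - (norm u)\<^sup>2) * l + (norm (v - u))\<^sup>2 * l\<^sup>2" for l
  proof -
    have e0: "xk1 + l *\<^sub>R (xs - xk1) - xk = u + l *\<^sub>R (v - u)" by (simp add: u_def v_def algebra_simps)
    have e1: "(norm (u + l *\<^sub>R (v - u)))\<^sup>2 = u \<bullet> u + 2 * l * (u \<bullet> (v - u)) + l\<^sup>2 * ((v - u) \<bullet> (v - u))"
      unfolding power2_norm_eq_inner by (simp add: inner_add_left inner_add_right inner_commute power2_eq_square)
    have e2: "u \<bullet> (v - u) = u \<bullet> v - (norm u)\<^sup>2" by (simp add: inner_diff_right power2_norm_eq_inner)
    have e3: "(v - u) \<bullet> (v - u) = (norm (v - u))\<^sup>2" by (simp add: power2_norm_eq_inner)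
    have e4: "u \<bullet> u = (norm u)\<^sup>2" by (simp add: power2_norm_eq_inner)
    show ?thesis unfolding e0 e1 e2 e3 e4 by (simp only: mult.commute mult.left_commute mult.assoc)
  qed
  have q: "(norm u)\<^sup>2 = t\<^sup>2 \<and> u \<bullet> v - (norm u)\<^sup>2 \<ge> 0"
  proof (rule quad_lemma)
    fix l :: real assume "0 < l" "l \<le> 1"
    from key[OF this] tpos have "t\<^sup>2 \<le> (norm (xk1 + l *\<^sub>R (xs - xk1) - xk))\<^sup>2"
      by (simp add: power_mono)
    thus "(norm u)\<^sup>2 + 2 * (u \<bullet> v - (norm u)\<^sup>2) * l + (norm (v - u))\<^sup>2 * l\<^sup>2 \<ge> t\<^sup>2"
      by (simp add: exp)
  next
    have "norm u \<le> t" using xk1_min(1) by (simp add: u_def dist_norm norm_minus_commute)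
    thus "(norm u)\<^sup>2 \<le> t\<^sup>2" by (simp add: power_mono)
  qed simp
  have ii: "norm (xk1 - xk) = t"
    using q tpos by (metis u_def norm_ge_zero power2_eq_iff_nonneg less_imp_le)
  have "(norm (xk1 - xs))\<^sup>2 = (norm (u - v))\<^sup>2" by (simp add: u_def v_def)
  also have "\<dots> = (norm u)\<^sup>2 - 2 * (u \<bullet> v) + (norm v)\<^sup>2"
    by (simp add: power2_norm_eq_inner inner_simps inner_commute)
  also have "\<dots> \<le> (norm v)\<^sup>2 - t\<^sup>2" using q by linarith
  also have "(norm v)\<^sup>2 = (norm (xk - xs))\<^sup>2" by (simp add: v_def norm_minus_commute)
  finally show ?thesis using i ii by simp
qed

end
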